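(* If $H$ is a finite graph, then there exists a $3$-edge-coloring $c:E(H)\to\{1,2,3\}$ of $H$ such that every vertex $v$ with $d_H(v)\ge 4$ is majority colored.
   Context: A vertex $v$ is majority colored if for every color $\alpha$, the number of edges incident to $v$ colored $\alpha$ is at most the number of edges incident to $v$ not colored $\alpha$. *)

theory Defs
  imports Main
begin

definition finite_simple_graph :: "'a set \<Rightarrow> 'a set set \<Rightarrow> bool" where
  "finite_simple_graph V E \<longleftrightarrow> finite V \<and> (\<forall>e\<in>E. e \<subseteq> V \<and> card e = 2)"

definition incident_edges :: "'a set set \<Rightarrow> 'a \<Rightarrow> 'a set set" where
  "incident_edges E v = {e \<in> E. v \<in> e}"

definition degree :: "'a set set \<Rightarrow> 'a \<Rightarrow> nat" where
  "degree E v = card (incident_edges E v)"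

definition majority_colored :: "'a set set \<Rightarrow> ('a set \<Rightarrow> 'c) \<Rightarrow> 'a \<Rightarrow> bool" where
  "majority_colored E c v \<longleftrightarrow>
     (\<forall>\<alpha>. card {e \<in> incident_edges E v. c e = \<alpha>} \<le> card {e \<in> incident_edges E v. c e \<noteq> \<alpha>})"

end

theory Submission
  imports Defs
begin

definition cnt :: "'e set \<Rightarrow> ('e \<Rightarrow> 'v) \<Rightarrow> 'v \<Rightarrow> nat" where
  "cnt F t z = (\<Sum>e\<in>F. if t e = z then 1 else 0)"

lemma cnt_card: "finite F \<Longrightarrow> cnt F t z = card {e\<in>F. t e = z}"
  unfolding cnt_def by (simp add: sum.inter_filter[symmetric])

lemma euler_orient:
  fixes F :: "'e set" and a b :: "'e \<Rightarrow> 'v"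
  shows "finite F \<Longrightarrow> \<exists>T H. (\<forall>e\<in>F. (T e = a e \<and> H e = b e) \<or> (T e = b e \<and> H e = a e)) \<and>
     (\<forall>z. cnt F T z \<le> cnt F H z + 1 \<and> cnt F H z \<le> cnt F T z + 1)"
proof (induction "card F" arbitrary: F a b rule: less_induct)
  case less
  show ?case
  proof (cases "\<exists>v e1 e2. e1 \<in> F \<and> e2 \<in> F \<and> e1 \<noteq> e2 \<and> (v = a e1 \<or> v = b e1) \<and> (v = a e2 \<or> v = b e2)")
    case True
    then obtain v e1 e2 where e: "e1 \<in> F" "e2 \<in> F" "e1 \<noteq> e2" "v = a e1 \<or> v = b e1" "v = a e2 \<or> v = b e2"
      by blast
    define u where "u = (if b e1 = v then a e1 else b e1)"
    define w where "w = (if a e2 = v then b e2 else a e2)"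
    define A where "A = a(e1 := u)"
    define B where "B = b(e1 := w)"
    define F' where "F' = F - {e2}"
    have fin': "finite F'" using less.prems F'_def by auto
    have lt: "card F' < card F" unfolding F'_def using e less.prems by (meson card_Diff1_less)
    obtain T' H' where TH': "\<forall>e\<in>F'. (T' e = A e \<and> H' e = B e) \<or> (T' e = B e \<and> H' e = A e)"
      "\<forall>z. cnt F' T' z \<le> cnt F' H' z + 1 \<and> cnt F' H' z \<le> cnt F' T' z + 1"
      using less.hyps[OF lt fin'] by blast
    have e1F': "e1 \<in> F'" using e F'_def by auto
    have TH1: "(T' e1 = u \<and> H' e1 = w) \<or> (T' e1 = w \<and> H' e1 = u)"
      using TH'(1) e1F' A_def B_def by auto
    define T where "T = (if T' e1 = u then T'(e1 := u, e2 := v) else T'(e1 := v, e2 := w))"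
    define H where "H = (if T' e1 = u then H'(e1 := v, e2 := w) else H'(e1 := u, e2 := v))"
    let ?R = "F - {e1, e2}"
    have finR: "finite ?R" using less.prems by auto
    have dec: "\<And>g::'e\<Rightarrow>nat. sum g F = g e1 + g e2 + sum g ?R"
    proof -
      fix g :: "'e \<Rightarrow> nat"
      have "sum g F = g e1 + sum g (F - {e1})" using less.prems e by (simp add: sum.remove)
      also have "sum g (F - {e1}) = g e2 + sum g (F - {e1} - {e2})"
        using less.prems e by (simp add: sum.remove)
      finally show "sum g F = g e1 + g e2 + sum g ?R"
        by (metis Diff_insert2 add.assoc insert_commute)
    qed
    have dec': "\<And>g::'e\<Rightarrow>nat. sum g F' = g e1 + sum g ?R"
    proof -
      fix g :: "'e \<Rightarrow> nat"
      have "sum g F' = g e1 + sum g (F' - {e1})" using fin' e1F' by (simp add: sum.remove)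
      then show "sum g F' = g e1 + sum g ?R" unfolding F'_def by (metis Diff_insert2 insert_commute)
    qed
    have RT: "\<And>z. cnt ?R T z = cnt ?R T' z" "\<And>z. cnt ?R H z = cnt ?R H' z"
      unfolding cnt_def T_def H_def using e by (auto intro!: sum.cong)
    have cT: "\<And>z. cnt F T z = cnt F' T' z + (if v = z then 1 else 0)"
      unfolding cnt_def dec dec' using RT(1)[unfolded cnt_def] e TH1 T_def by auto
    have cH: "\<And>z. cnt F H z = cnt F' H' z + (if v = z then 1 else 0)"
      unfolding cnt_def dec dec' using RT(2)[unfolded cnt_def] e TH1 H_def by auto
    have valid: "\<forall>e\<in>F. (T e = a e \<and> H e = b e) \<or> (T e = b e \<and> H e = a e)"
    proof
      fix e assume eF: "e \<in> F"
      show "(T e = a e \<and> H e = b e) \<or> (T e = b e \<and> H e = a e)"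
      proof (cases "e = e1 \<or> e = e2")
        case True
        then show ?thesis using e TH1 T_def H_def u_def w_def by auto
      next
        case False
        then have "e \<in> F'" using eF F'_def by auto
        then show ?thesis using TH'(1) False T_def H_def A_def B_def by auto
      qed
    qed
    show ?thesis
      apply (rule exI[of _ T], rule exI[of _ H])
      using valid cT cH TH'(2) by auto
  next
    case False
    have le1: "\<And>z t. (\<forall>e\<in>F. t e = a e) \<or> (\<forall>e\<in>F. t e = b e) \<Longrightarrow> cnt F t z \<le> 1"
    proof -
      fix z t assume h: "(\<forall>e\<in>F. t e = a e) \<or> (\<forall>e\<in>F. t e = b e)"
      have "card {e\<in>F. t e = z} \<le> Suc 0"
        using False h less.prems by (subst card_le_Suc0_iff_eq) (auto, metis+)
      then show "cnt F t z \<le> 1" using cnt_card[OF less.prems, of t z] by simp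
    qed
    show ?thesis
      apply (rule exI[of _ a], rule exI[of _ b])
    proof (intro conjI allI ballI)
      fix z
      have "cnt F a z \<le> 1" "cnt F b z \<le> 1" using le1[of a z] le1[of b z] by auto
      then show "cnt F a z \<le> cnt F b z + 1" "cnt F b z \<le> cnt F a z + 1" by auto
    qed auto
  qed
qed


inductive_set kem :: "'e set \<Rightarrow> ('e \<Rightarrow> 'l) \<Rightarrow> ('e \<Rightarrow> 'r) \<Rightarrow> ('e \<Rightarrow> nat) \<Rightarrow> 'r \<Rightarrow> nat \<Rightarrow> nat \<Rightarrow> 'e set"
  for F p q c y \<alpha> \<beta> where
  k1: "f \<in> F \<Longrightarrow> q f = y \<Longrightarrow> c f = \<alpha> \<Longrightarrow> f \<in> kem F p q c y \<alpha> \<beta>"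
| k2: "f \<in> kem F p q c y \<alpha> \<beta> \<Longrightarrow> c f = \<alpha> \<Longrightarrow> g \<in> F \<Longrightarrow> p g = p f \<Longrightarrow> c g = \<beta> \<Longrightarrow> g \<in> kem F p q c y \<alpha> \<beta>"
| k3: "f \<in> kem F p q c y \<alpha> \<beta> \<Longrightarrow> c f = \<beta> \<Longrightarrow> g \<in> F \<Longrightarrow> q g = q f \<Longrightarrow> c g = \<alpha> \<Longrightarrow> g \<in> kem F p q c y \<alpha> \<beta>"

lemma kem_basic: "f \<in> kem F p q c y \<alpha> \<beta> \<Longrightarrow> f \<in> F \<and> (c f = \<alpha> \<or> c f = \<beta>)"
  by (induction rule: kem.induct) auto

lemma kem_beta: "f \<in> kem F p q c y \<alpha> \<beta> \<Longrightarrow> c f = \<beta> \<Longrightarrow> \<alpha> \<noteq> \<beta> \<Longrightarrow>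
   \<exists>f0\<in>kem F p q c y \<alpha> \<beta>. c f0 = \<alpha> \<and> p f0 = p f"
  by (induction rule: kem.cases) auto

lemma kem_alpha: "f \<in> kem F p q c y \<alpha> \<beta> \<Longrightarrow> c f = \<alpha> \<Longrightarrow> \<alpha> \<noteq> \<beta> \<Longrightarrow>
   q f = y \<or> (\<exists>f0\<in>kem F p q c y \<alpha> \<beta>. c f0 = \<beta> \<and> q f0 = q f)"
  by (induction rule: kem.cases) auto

definition proper3 :: "'e set \<Rightarrow> ('e \<Rightarrow> 'l) \<Rightarrow> ('e \<Rightarrow> 'r) \<Rightarrow> ('e \<Rightarrow> nat) \<Rightarrow> bool" where
  "proper3 F p q c \<longleftrightarrow> (\<forall>e\<in>F. c e \<in> {1,2,3}) \<and>
     (\<forall>e\<in>F. \<forall>f\<in>F. e \<noteq> f \<longrightarrow> (p e = p f \<or> q e = q f) \<longrightarrow> c e \<noteq> c f)"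

lemma missing_color:
  assumes "finite A" "card A \<le> 2"
  shows "\<exists>\<alpha>\<in>{1,2,3::nat}. \<alpha> \<notin> c ` A"
proof (rule ccontr)
  assume "\<not> ?thesis"
  then have "{1,2,3} \<subseteq> c ` A" by auto
  then have "card {1,2,3::nat} \<le> card (c ` A)" using assms by (intro card_mono) auto
  also have "\<dots> \<le> card A" by (rule card_image_le[OF assms(1)])
  finally show False using assms by simp
qed

lemma konig3:
  fixes F :: "'e set" and p :: "'e \<Rightarrow> 'l" and q :: "'e \<Rightarrow> 'r"
  assumes "finite F"
  shows "(\<forall>x. card {e\<in>F. p e = x} \<le> 3) \<Longrightarrow> (\<forall>y. card {e\<in>F. q e = y} \<le> 3) \<Longrightarrow> \<exists>c. proper3 F p q c"
  using assms
proof (induction F rule: finite_induct)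
  case empty
  then show ?case by (auto simp: proper3_def)
next
  case (insert e F)
  have dx: "\<forall>x. card {f\<in>F. p f = x} \<le> 3"
  proof
    fix x
    have "card {f\<in>F. p f = x} \<le> card {f\<in>insert e F. p f = x}"
      using insert.hyps by (intro card_mono) auto
    then show "card {f\<in>F. p f = x} \<le> 3" using insert.prems(1) by (meson order_trans)
  qed
  have dy: "\<forall>y. card {f\<in>F. q f = y} \<le> 3"
  proof
    fix y
    have "card {f\<in>F. q f = y} \<le> card {f\<in>insert e F. q f = y}"
      using insert.hyps by (intro card_mono) auto
    then show "card {f\<in>F. q f = y} \<le> 3" using insert.prems(2) by (meson order_trans)
  qed
  obtain c where c: "proper3 F p q c" using insert.IH[OF dx dy] insert.hyps by blast
  define x where "x = p e"
  define y where "y = q e"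
  define Fx where "Fx = {f\<in>F. p f = x}"
  define Fy where "Fy = {f\<in>F. q f = y}"
  have "card (insert e Fx) \<le> 3"
  proof -
    have "insert e Fx = {f\<in>insert e F. p f = x}" unfolding Fx_def x_def by auto
    then show ?thesis using insert.prems(1) by simp
  qed
  then have cFx: "card Fx \<le> 2" using insert.hyps Fx_def by (simp add: card_insert_if)
  have "card (insert e Fy) \<le> 3"
  proof -
    have "insert e Fy = {f\<in>insert e F. q f = y}" unfolding Fy_def y_def by auto
    then show ?thesis using insert.prems(2) by simp
  qed
  then have cFy: "card Fy \<le> 2" using insert.hyps Fy_def by (simp add: card_insert_if)
  obtain \<alpha> where \<alpha>: "\<alpha> \<in> {1,2,3}" "\<alpha> \<notin> c ` Fx"
    using missing_color[OF _ cFx, of c] insert.hyps Fx_def by auto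
  obtain \<beta> where \<beta>: "\<beta> \<in> {1,2,3}" "\<beta> \<notin> c ` Fy"
    using missing_color[OF _ cFy, of c] insert.hyps Fy_def by auto
  have cF: "\<forall>e\<in>F. c e \<in> {1,2,3}" and cP: "\<forall>e\<in>F. \<forall>f\<in>F. e \<noteq> f \<longrightarrow> (p e = p f \<or> q e = q f) \<longrightarrow> c e \<noteq> c f"
    using c unfolding proper3_def by auto
  have extend: "\<exists>c. proper3 (insert e F) p q c" if g: "g \<in> {1,2,3}" "g \<notin> c ` Fx" "g \<notin> c ` Fy" for g
  proof -
    have "proper3 (insert e F) p q (c(e := g))"
      unfolding proper3_def
    proof (intro conjI ballI impI)
      fix f assume "f \<in> insert e F" then show "(c(e := g)) f \<in> {1, 2, 3}" using g cF by auto
    next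
      fix f1 f2 assume h: "f1 \<in> insert e F" "f2 \<in> insert e F" "f1 \<noteq> f2" "p f1 = p f2 \<or> q f1 = q f2"
      show "(c(e := g)) f1 \<noteq> (c(e := g)) f2"
      proof (cases "f1 = e \<or> f2 = e")
        case True
        then show ?thesis using h g insert.hyps unfolding Fx_def Fy_def x_def y_def by (auto simp: image_iff)
      next
        case False
        then show ?thesis using h cP by auto
      qed
    qed
    then show ?thesis by blast
  qed
  show ?case
  proof (cases "\<alpha> \<notin> c ` Fy")
    case True then show ?thesis using extend \<alpha> by blast
  next
    case aFy: False
    show ?thesis
    proof (cases "\<beta> \<notin> c ` Fx")
      case True then show ?thesis using extend \<beta> by blast
    next
      case bFx: False
      have ab: "\<alpha> \<noteq> \<beta>" using aFy \<beta> by auto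
      define S where "S = kem F p q c y \<alpha> \<beta>"
      define c' where "c' = (\<lambda>f. if f \<in> S then (if c f = \<alpha> then \<beta> else \<alpha>) else c f)"
      have SF: "\<And>f. f \<in> S \<Longrightarrow> f \<in> F \<and> (c f = \<alpha> \<or> c f = \<beta>)" using kem_basic S_def by metis
      have noSx: "\<And>f. f \<in> S \<Longrightarrow> p f \<noteq> x"
      proof
        fix f assume fS: "f \<in> S" and px: "p f = x"
        show False
        proof (cases "c f = \<alpha>")
          case True then show False using \<alpha> fS SF px Fx_def by auto
        next
          case False
          then have "c f = \<beta>" using SF fS by auto
          then obtain f0 where "f0 \<in> S" "c f0 = \<alpha>" "p f0 = p f"
            using kem_beta[of f F p q c y \<alpha> \<beta>] fS ab S_def by auto
          then show False using \<alpha> SF px Fx_def by force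
        qed
      qed
      have c'F: "\<forall>f\<in>F. c' f \<in> {1,2,3}" using cF \<alpha> \<beta> c'_def by auto
      have c'P: "\<forall>f1\<in>F. \<forall>f2\<in>F. f1 \<noteq> f2 \<longrightarrow> (p f1 = p f2 \<or> q f1 = q f2) \<longrightarrow> c' f1 \<noteq> c' f2"
      proof (intro ballI impI)
        fix f1 f2 assume h: "f1 \<in> F" "f2 \<in> F" "f1 \<noteq> f2" "p f1 = p f2 \<or> q f1 = q f2"
        have base: "c f1 \<noteq> c f2" using cP h by auto
        have one: "c' f \<noteq> c' g" if f: "f \<in> S" and g: "g \<in> F" "g \<notin> S" and fg: "f \<noteq> g" "p f = p g \<or> q f = q g" for f g
        proof -
          have "c f \<noteq> c g" using cP f g fg SF by blast
          show ?thesis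
          proof (cases "c g = \<alpha> \<or> c g = \<beta>")
            case False then show ?thesis using f g c'_def by auto
          next
            case True
            show ?thesis
            proof (cases "c f = \<alpha>")
              case fa: True
              then have gb: "c g = \<beta>" using True \<open>c f \<noteq> c g\<close> by auto
              show ?thesis
              proof (cases "p f = p g")
                case True
                then have "g \<in> S" using kem.k2[of f F p q c y \<alpha> \<beta> g] f fa g gb S_def by auto
                then show ?thesis using g by auto
              next
                case False
                then have qq: "q f = q g" using fg by auto
                from kem_alpha[of f F p q c y \<alpha> \<beta>] f fa ab S_def
                have "q f = y \<or> (\<exists>f0\<in>S. c f0 = \<beta> \<and> q f0 = q f)" by auto
                then show ?thesis
                proof
                  assume "q f = y"
                  then show ?thesis using \<beta> g gb qq Fy_def by auto
                next
                  assume "\<exists>f0\<in>S. c f0 = \<beta> \<and> q f0 = q f"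
                  then obtain f0 where "f0 \<in> S" "c f0 = \<beta>" "q f0 = q f" by auto
                  then have "f0 = g" using cP SF g gb qq by metis
                  then show ?thesis using g \<open>f0 \<in> S\<close> by auto
                qed
              qed
            next
              case fb: False
              then have fb: "c f = \<beta>" using SF f by auto
              then have ga: "c g = \<alpha>" using True \<open>c f \<noteq> c g\<close> by auto
              show ?thesis
              proof (cases "q f = q g")
                case True
                then have "g \<in> S" using kem.k3[of f F p q c y \<alpha> \<beta> g] f fb g ga S_def by auto
                then show ?thesis using g by auto
              next
                case False
                then have pp: "p f = p g" using fg by auto
                obtain f0 where "f0 \<in> S" "c f0 = \<alpha>" "p f0 = p f"
                  using kem_beta[of f F p q c y \<alpha> \<beta>] f fb ab S_def by auto
                then have "f0 = g" using cP SF g ga pp by metis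
                then show ?thesis using g \<open>f0 \<in> S\<close> by auto
              qed
            qed
          qed
        qed
        show "c' f1 \<noteq> c' f2"
        proof (cases "f1 \<in> S")
          case True
          show ?thesis
          proof (cases "f2 \<in> S")
            case True
            then show ?thesis using \<open>f1 \<in> S\<close> base SF c'_def ab by auto
          next
            case False
            then show ?thesis using one[of f1 f2] True h by auto
          qed
        next
          case False
          show ?thesis
          proof (cases "f2 \<in> S")
            case True
            then show ?thesis using one[of f2 f1] False h by metis
          next
            case False
            then show ?thesis using \<open>f1 \<notin> S\<close> base c'_def by auto
          qed
        qed
      qed
      have ax: "\<alpha> \<notin> c' ` Fx"
      proof
        assume "\<alpha> \<in> c' ` Fx"
        then obtain f where f: "f \<in> Fx" "c' f = \<alpha>" by auto
        then have "f \<notin> S" using noSx Fx_def by auto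
        then show False using f \<alpha> c'_def by auto
      qed
      have ay: "\<alpha> \<notin> c' ` Fy"
      proof
        assume "\<alpha> \<in> c' ` Fy"
        then obtain f where f: "f \<in> Fy" "c' f = \<alpha>" by auto
        show False
        proof (cases "f \<in> S")
          case True
          then have "c f = \<beta>" using f c'_def SF ab by (auto split: if_splits)
          then show False using \<beta> f by auto
        next
          case False
          then have "c f = \<alpha>" using f c'_def by auto
          then have "f \<in> S" using f Fy_def S_def y_def by (auto intro: kem.k1)
          then show False using False by auto
        qed
      qed
      have "proper3 (insert e F) p q (c'(e := \<alpha>))"
        unfolding proper3_def
      proof (intro conjI ballI impI)
        fix f assume "f \<in> insert e F" then show "(c'(e := \<alpha>)) f \<in> {1, 2, 3}" using \<alpha> c'F by auto
      next
        fix f1 f2 assume h: "f1 \<in> insert e F" "f2 \<in> insert e F" "f1 \<noteq> f2" "p f1 = p f2 \<or> q f1 = q f2"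
        show "(c'(e := \<alpha>)) f1 \<noteq> (c'(e := \<alpha>)) f2"
        proof (cases "f1 = e \<or> f2 = e")
          case True
          then show ?thesis using h ax ay insert.hyps unfolding Fx_def Fy_def x_def y_def by (auto simp: image_iff)
        next
          case False
          then show ?thesis using h c'P by auto
        qed
      qed
      then show ?thesis by blast
    qed
  qed
qed


lemma group_card:
  assumes "finite A" "bij_betw h A {0..<card A}"
  shows "card {e\<in>A. h e div 3 = j} \<le> 3"
proof -
  have inj: "inj_on h {e\<in>A. h e div 3 = j}"
    using assms(2) unfolding bij_betw_def by (auto intro: inj_on_subset)
  have sub: "h ` {e\<in>A. h e div 3 = j} \<subseteq> {3*j..<3*j+3}" by auto
  have "card {e\<in>A. h e div 3 = j} = card (h ` {e\<in>A. h e div 3 = j})"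
    using inj by (simp add: card_image)
  also have "\<dots> \<le> card {3*j..<3*j+3}" using sub by (intro card_mono) auto
  finally show ?thesis by simp
qed

lemma group_color:
  assumes "finite A" "bij_betw h A {0..<card A}"
    and "\<forall>e\<in>A. \<forall>f\<in>A. e \<noteq> f \<longrightarrow> h e div 3 = h f div 3 \<longrightarrow> c e \<noteq> c f"
  shows "card {e\<in>A. c e = \<alpha>} \<le> (card A + 2) div 3"
proof -
  have inj: "inj_on (\<lambda>e. h e div 3) {e\<in>A. c e = \<alpha>}"
    using assms(3) unfolding inj_on_def by (metis (mono_tags, lifting) mem_Collect_eq)
  have sub: "(\<lambda>e. h e div 3) ` {e\<in>A. c e = \<alpha>} \<subseteq> {0..<(card A + 2) div 3}"
  proof
    fix k assume "k \<in> (\<lambda>e. h e div 3) ` {e\<in>A. c e = \<alpha>}"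
    then obtain e where "e \<in> A" "k = h e div 3" by auto
    then have "h e < card A" using assms(2) unfolding bij_betw_def by auto
    then show "k \<in> {0..<(card A + 2) div 3}" using \<open>k = h e div 3\<close> by simp
  qed
  have "card {e\<in>A. c e = \<alpha>} = card ((\<lambda>e. h e div 3) ` {e\<in>A. c e = \<alpha>})"
    using inj by (simp add: card_image)
  also have "\<dots> \<le> card {0..<(card A + 2) div 3}" using sub by (intro card_mono) auto
  finally show ?thesis by simp
qed

lemma arith_main:
  fixes m i n :: nat
  assumes "m \<le> i + 1" "i \<le> m + 1" "4 \<le> m + i" "n \<le> (m + 2) div 3 + (i + 2) div 3"
  shows "2 * n \<le> m + i"
proof (cases "8 \<le> m + i")
  case True
  have "3 * ((m + 2) div 3) \<le> m + 2" "3 * ((i + 2) div 3) \<le> i + 2" by auto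
  then show ?thesis using assms True by linarith
next
  case False
  then have "m \<in> {2,3,4}" "i \<in> {2,3,4}" using assms by auto
  then show ?thesis using assms False by auto
qed

theorem mainTheorem11:
  fixes V :: "'a set" and E :: "'a set set"
  assumes "finite_simple_graph V E"
  shows "\<exists>c :: 'a set \<Rightarrow> nat. (\<forall>e\<in>E. c e \<in> {1, 2, 3}) \<and>
           (\<forall>v\<in>V. degree E v \<ge> 4 \<longrightarrow> majority_colored E c v)"
proof -
  have finV: "finite V" and Ein: "\<forall>e\<in>E. e \<subseteq> V \<and> card e = 2"
    using assms unfolding finite_simple_graph_def by auto
  have finE: "finite E"
    using finV Ein by (meson Pow_iff finite_Pow_iff rev_finite_subset subsetI)
  define a where "a = (\<lambda>e::'a set. SOME x. x \<in> e)"
  define b where "b = (\<lambda>e::'a set. SOME y. y \<in> e \<and> y \<noteq> a e)"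
  have ab: "\<And>e. e \<in> E \<Longrightarrow> e = {a e, b e} \<and> a e \<noteq> b e"
  proof -
    fix e assume "e \<in> E"
    then obtain x y where xy: "e = {x, y}" "x \<noteq> y" using Ein card_2_iff by metis
    have ae: "a e \<in> e" unfolding a_def using xy by (metis insertI1 someI)
    have "\<exists>y. y \<in> e \<and> y \<noteq> a e" using xy ae by auto
    then have be: "b e \<in> e \<and> b e \<noteq> a e" unfolding b_def by (rule someI_ex)
    show "e = {a e, b e} \<and> a e \<noteq> b e" using ae be xy by auto
  qed
  obtain T H where TH: "\<forall>e\<in>E. (T e = a e \<and> H e = b e) \<or> (T e = b e \<and> H e = a e)"
    "\<forall>z. cnt E T z \<le> cnt E H z + 1 \<and> cnt E H z \<le> cnt E T z + 1"
    using euler_orient[OF finE, of a b] by blast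
  have THe: "\<And>e. e \<in> E \<Longrightarrow> e = {T e, H e} \<and> T e \<noteq> H e" using TH(1) ab by fastforce
  define Out where "Out = (\<lambda>v. {e\<in>E. T e = v})"
  define In where "In = (\<lambda>v. {e\<in>E. H e = v})"
  have finO: "\<And>v. finite (Out v)" and finI: "\<And>v. finite (In v)" using finE Out_def In_def by auto
  define hO where "hO = (\<lambda>v. SOME h. bij_betw h (Out v) {0..<card (Out v)})"
  define hI where "hI = (\<lambda>v. SOME h. bij_betw h (In v) {0..<card (In v)})"
  have bO: "\<And>v. bij_betw (hO v) (Out v) {0..<card (Out v)}"
    unfolding hO_def using ex_bij_betw_finite_nat[OF finO] by (rule someI_ex)
  have bI: "\<And>v. bij_betw (hI v) (In v) {0..<card (In v)}"
    unfolding hI_def using ex_bij_betw_finite_nat[OF finI] by (rule someI_ex)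
  define p where "p = (\<lambda>e. (T e, hO (T e) e div 3))"
  define q where "q = (\<lambda>e. (H e, hI (H e) e div 3))"
  have dp: "\<forall>x. card {e\<in>E. p e = x} \<le> 3"
  proof
    fix x :: "'a \<times> nat"
    obtain v j where x: "x = (v, j)" by fastforce
    have "{e\<in>E. p e = x} = {e\<in>Out v. hO v e div 3 = j}" unfolding x p_def Out_def by auto
    then show "card {e\<in>E. p e = x} \<le> 3" using group_card[OF finO bO] by simp
  qed
  have dq: "\<forall>x. card {e\<in>E. q e = x} \<le> 3"
  proof
    fix x :: "'a \<times> nat"
    obtain v j where x: "x = (v, j)" by fastforce
    have "{e\<in>E. q e = x} = {e\<in>In v. hI v e div 3 = j}" unfolding x q_def In_def by auto
    then show "card {e\<in>E. q e = x} \<le> 3" using group_card[OF finI bI] by simp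
  qed
  obtain c where c: "proper3 E p q c" using konig3[OF finE dp dq] by blast
  have c1: "\<forall>e\<in>E. c e \<in> {1,2,3}" and cP: "\<forall>e\<in>E. \<forall>f\<in>E. e \<noteq> f \<longrightarrow> (p e = p f \<or> q e = q f) \<longrightarrow> c e \<noteq> c f"
    using c unfolding proper3_def by auto
  have maj: "majority_colored E c v" if "v \<in> V" "degree E v \<ge> 4" for v
  proof -
    have inc: "incident_edges E v = Out v \<union> In v" unfolding incident_edges_def Out_def In_def
      using THe by (auto, metis insertE singletonD)
    have disj: "Out v \<inter> In v = {}" unfolding Out_def In_def using THe by (auto, metis)
    have deg: "degree E v = card (Out v) + card (In v)"
      unfolding degree_def inc using disj finO finI by (simp add: card_Un_disjoint)
    have oi: "card (Out v) \<le> card (In v) + 1" "card (In v) \<le> card (Out v) + 1"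
      using TH(2) cnt_card[OF finE] unfolding Out_def In_def by metis+
    have gO: "\<forall>e\<in>Out v. \<forall>f\<in>Out v. e \<noteq> f \<longrightarrow> hO v e div 3 = hO v f div 3 \<longrightarrow> c e \<noteq> c f"
      using cP unfolding Out_def p_def by auto
    have gI: "\<forall>e\<in>In v. \<forall>f\<in>In v. e \<noteq> f \<longrightarrow> hI v e div 3 = hI v f div 3 \<longrightarrow> c e \<noteq> c f"
      using cP unfolding In_def q_def by auto
    show ?thesis unfolding majority_colored_def
    proof
      fix \<alpha>
      let ?A = "{e \<in> incident_edges E v. c e = \<alpha>}"
      let ?B = "{e \<in> incident_edges E v. c e \<noteq> \<alpha>}"
      have finInc: "finite (incident_edges E v)" using inc finO finI by auto
      have "?A \<subseteq> {e\<in>Out v. c e = \<alpha>} \<union> {e\<in>In v. c e = \<alpha>}" using inc by auto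
      then have "card ?A \<le> card ({e\<in>Out v. c e = \<alpha>} \<union> {e\<in>In v. c e = \<alpha>})"
        using finO finI by (intro card_mono) auto
      also have "\<dots> \<le> card {e\<in>Out v. c e = \<alpha>} + card {e\<in>In v. c e = \<alpha>}" by (rule card_Un_le)
      also have "\<dots> \<le> (card (Out v) + 2) div 3 + (card (In v) + 2) div 3"
        using group_color[OF finO bO gO, of \<alpha>] group_color[OF finI bI gI, of \<alpha>] by linarith
      finally have nA: "card ?A \<le> (card (Out v) + 2) div 3 + (card (In v) + 2) div 3" .
      have "2 * card ?A \<le> card (Out v) + card (In v)"
        using arith_main[OF oi, of "card ?A"] nA deg that(2) by linarith
      moreover have "card ?A + card ?B = degree E v"
        unfolding degree_def using finInc by (subst card_Un_disjoint[symmetric]) (auto intro: arg_cong[where f=card])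
      ultimately show "card ?A \<le> card ?B" using deg by linarith
    qed
  qed
  show ?thesis using c1 maj by blast
qed

end
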